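(* Let $k\ge2$, $n\ge0$, $T\in\mathcal{T}^k_n$ and $\pi=\phi(T)$. Then $\operatorname{asc}(\pi)=\operatorname{casc}(T)$, $\operatorname{des}(\pi)=\operatorname{cdes}(T)$ and $\operatorname{plat}(\pi)=\operatorname{emp}(T)$.
   Context: For $k\ge2$, $\mathcal{T}^k_n$ is the set of plane rooted trees with $n$ edges labeled bijectively by $\{1,\dots,n\}$, in which every non-root vertex has $k-2$ unlabeled half-edges separating its children into $k-1$ ordered, possibly empty, compartments (the root has no half-edges). For a non-root vertex $c$ with parent-edge label $\ell$, set $W(c)=\ell\,U_1\,\ell\,U_2\,\ell\cdots\ell\,U_{k-1}\,\ell$, where $U_j$ is the concatenation of $W(c')$ over the children $c'$ in the $j$-th compartment of $c$, left to right; $\phi(T)$ is the concatenation of $W(c)$ over the root's children, left to right. For a sequence $\pi_1\cdots\pi_r$: $i\in\{1,\dots,r\}$ is a descent if $\pi_i>\pi_{i+1}$ or $i=r$; $i\in\{0,\dots,r-1\}$ is an ascent if $i=0$ or $\pi_i<\pi_{i+1}$; $i\in\{1,\dots,r-1\}$ is a plateau if $\pi_i=\pi_{i+1}$; $\operatorname{des},\operatorname{asc},\operatorname{plat}$ count these. Cyclic counts: $\operatorname{cdes}(\pi)=|\{i\in\{1,\dots,r\}:\pi_i>\pi_{i+1}\}|$ and $\operatorname{casc}(\pi)=|\{i\in\{1,\dots,r\}:\pi_i<\pi_{i+1}\}|$, with $\pi_{r+1}=\pi_1$. For a non-root vertex $v$ with parent-edge label $\ell$ and children-edge labels $a_{j,1},\dots,a_{j,d_j}$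 (left to right) in compartment $j$, set $\operatorname{cdes}(v)=\operatorname{cdes}(\ell a_{1,1}\cdots a_{1,d_1}\ell a_{2,1}\cdots a_{2,d_2}\ell\cdots\ell a_{k-1,1}\cdots a_{k-1,d_{k-1}})$ and $\operatorname{casc}(v)$ likewise with $\operatorname{casc}$. For the root with children-edge labels $a_1,\dots,a_d$ left to right, $\operatorname{cdes}(v)=\operatorname{des}(a_1\cdots a_d)$ and $\operatorname{casc}(v)=\operatorname{asc}(a_1\cdots a_d)$. Then $\operatorname{cdes}(T)=\sum_v\operatorname{cdes}(v)$, $\operatorname{casc}(T)=\sum_v\operatorname{casc}(v)$, and $\operatorname{emp}(T)$ is the total number of empty compartments over all non-root vertices. *)

theory Defs
  imports Main
begin

text \<open>A non-root vertex: the label of its parent edge and its list of compartments,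
  each compartment being the (left-to-right) list of children. A tree in T^k_n is
  represented by the left-to-right list of the root's children.\<close>
datatype ltree = Node nat "ltree list list"

fun lab :: "ltree \<Rightarrow> nat" where
  "lab (Node l cs) = l"

fun comps :: "ltree \<Rightarrow> ltree list list" where
  "comps (Node l cs) = cs"

fun labs :: "ltree \<Rightarrow> nat list" where
  "labs (Node l cs) = l # concat (map (\<lambda>U. concat (map labs U)) cs)"

fun wf_node :: "nat \<Rightarrow> ltree \<Rightarrow> bool" where
  "wf_node k (Node l cs) = (length cs = k - 1 \<and> (\<forall>U\<in>set cs. \<forall>c\<in>set U. wf_node k c))"

definition tree_labels :: "ltree list \<Rightarrow> nat list" where
  "tree_labels ts = concat (map labs ts)"

definition in_Tkn :: "nat \<Rightarrow> nat \<Rightarrow> ltree list \<Rightarrow> bool" where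
  "in_Tkn k n ts = ((\<forall>t\<in>set ts. wf_node k t) \<and> distinct (tree_labels ts)
                    \<and> set (tree_labels ts) = {1..n})"

fun W :: "ltree \<Rightarrow> nat list" where
  "W (Node l cs) = l # concat (map (\<lambda>U. concat (map W U) @ [l]) cs)"

definition phi :: "ltree list \<Rightarrow> nat list" where
  "phi ts = concat (map W ts)"

text \<open>Statistics on sequences (list index i-1 corresponds to \<pi>_i).\<close>
definition des :: "nat list \<Rightarrow> nat" where
  "des xs = card {i\<in>{1..length xs}. i = length xs \<or> xs ! (i - 1) > xs ! i}"

definition asc :: "nat list \<Rightarrow> nat" where
  "asc xs = card {i\<in>{0..<length xs}. i = 0 \<or> xs ! (i - 1) < xs ! i}"

definition plat :: "nat list \<Rightarrow> nat" where
  "plat xs = card {i\<in>{1..<length xs}. xs ! (i - 1) = xs ! i}"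

definition cdes_seq :: "nat list \<Rightarrow> nat" where
  "cdes_seq xs = card {i\<in>{1..length xs}. xs ! (i - 1) > xs ! (i mod length xs)}"

definition casc_seq :: "nat list \<Rightarrow> nat" where
  "casc_seq xs = card {i\<in>{1..length xs}. xs ! (i - 1) < xs ! (i mod length xs)}"

fun vword :: "ltree \<Rightarrow> nat list" where
  "vword (Node l cs) = concat (map (\<lambda>U. l # map lab U) cs)"

fun cdes_node :: "ltree \<Rightarrow> nat" where
  "cdes_node (Node l cs) = cdes_seq (vword (Node l cs))
     + sum_list (map (\<lambda>U. sum_list (map cdes_node U)) cs)"

fun casc_node :: "ltree \<Rightarrow> nat" where
  "casc_node (Node l cs) = casc_seq (vword (Node l cs))
     + sum_list (map (\<lambda>U. sum_list (map casc_node U)) cs)"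

fun emp_node :: "ltree \<Rightarrow> nat" where
  "emp_node (Node l cs) = length (filter (\<lambda>U. U = []) cs)
     + sum_list (map (\<lambda>U. sum_list (map emp_node U)) cs)"

definition cdes :: "ltree list \<Rightarrow> nat" where
  "cdes ts = des (map lab ts) + sum_list (map cdes_node ts)"

definition casc :: "ltree list \<Rightarrow> nat" where
  "casc ts = asc (map lab ts) + sum_list (map casc_node ts)"

definition emp :: "ltree list \<Rightarrow> nat" where
  "emp ts = sum_list (map emp_node ts)"

end

theory Submission
  imports Defs
begin

fun cnt :: "(nat \<times> nat \<Rightarrow> bool) \<Rightarrow> nat list \<Rightarrow> nat" where
  "cnt P (a # b # xs) = (if P (a, b) then 1 else 0) + cnt P (b # xs)"
| "cnt P _ = 0"

lemma cnt_Cons: "cnt P (a # ys) = (if ys \<noteq> [] \<and> P (a, hd ys) then 1 else 0) + cnt P ys"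
  by (cases ys) auto

lemma cnt_append: "cnt P (xs @ ys) = cnt P xs + cnt P ys
   + (if xs \<noteq> [] \<and> ys \<noteq> [] \<and> P (last xs, hd ys) then 1 else 0)"
proof (induction xs)
  case Nil then show ?case by simp
next
  case (Cons a xs) then show ?case
    by (cases xs; cases ys) (auto simp: cnt_Cons)
qed

lemma cnt_concat: "\<forall>L\<in>set Ls. L \<noteq> [] \<and> last L = hd L \<Longrightarrow>
   cnt P (concat Ls) = cnt P (map hd Ls) + sum_list (map (cnt P) Ls)"
proof (induction Ls)
  case Nil then show ?case by simp
next
  case (Cons L Ls)
  have h: "Ls \<noteq> [] \<Longrightarrow> concat Ls \<noteq> [] \<and> hd (concat Ls) = hd (hd Ls)"
    using Cons.prems by (cases Ls) auto
  show ?case using Cons h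
    by (cases "Ls = []") (auto simp: cnt_append cnt_Cons hd_map)
qed

lemma cnt_zip: "cnt P xs = length (filter P (zip xs (tl xs)))"
  by (induction P xs rule: cnt.induct) auto

lemma cnt_card: "cnt P xs = card {i\<in>{1..<length xs}. P (xs!(i-1), xs!i)}"
proof -
  have "cnt P xs = card {i. i < length xs - 1 \<and> P (xs!i, xs!Suc i)}"
    unfolding cnt_zip length_filter_conv_card
    by (rule arg_cong[where f=card]) (auto simp: nth_tl)
  also have "\<dots> = card (Suc ` {i. i < length xs - 1 \<and> P (xs!i, xs!Suc i)})"
    by (simp add: card_image)
  also have "Suc ` {i. i < length xs - 1 \<and> P (xs!i, xs!Suc i)} = {i\<in>{1..<length xs}. P (xs!(i-1), xs!i)}"
  proof (rule set_eqI, rule iffI)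
    fix x assume "x \<in> {i\<in>{1..<length xs}. P (xs!(i-1), xs!i)}"
    then show "x \<in> Suc ` {i. i < length xs - 1 \<and> P (xs!i, xs!Suc i)}"
      by (intro image_eqI[of _ _ "x - 1"]) auto
  qed auto
  finally show ?thesis .
qed

lemma cyc_lemma: "xs \<noteq> [] \<Longrightarrow>
  card {i\<in>{1..length xs}. Q (xs ! (i - 1)) (xs ! (i mod length xs))}
  = cnt (\<lambda>(a,b). Q a b) (xs @ [hd xs])"
proof -
  assume ne: "xs \<noteq> []"
  have "{i\<in>{1..length xs}. Q (xs ! (i - 1)) (xs ! (i mod length xs))}
     = {i\<in>{1..<length (xs @ [hd xs])}. (\<lambda>(a,b). Q a b) ((xs @ [hd xs])!(i-1), (xs @ [hd xs])!i)}"
  proof (rule set_eqI)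
    fix i
    show "i \<in> {i\<in>{1..length xs}. Q (xs ! (i - 1)) (xs ! (i mod length xs))} \<longleftrightarrow>
      i \<in> {i\<in>{1..<length (xs @ [hd xs])}. (\<lambda>(a,b). Q a b) ((xs @ [hd xs])!(i-1), (xs @ [hd xs])!i)}"
      using ne by (cases "i < length xs"; cases "i = length xs") (auto simp: nth_append hd_conv_nth)
  qed
  then show ?thesis by (simp add: cnt_card)
qed

lemma des_cnt: "des xs = (if xs = [] then 0 else 1) + cnt (\<lambda>(a,b). b < a) xs"
proof (cases "xs = []")
  case True then show ?thesis by (simp add: des_def)
next
  case False
  have "{i\<in>{1..length xs}. i = length xs \<or> xs ! (i - 1) > xs ! i}
    = insert (length xs) {i\<in>{1..<length xs}. (\<lambda>(a,b). b < a) (xs!(i-1), xs!i)}"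
    using False by (auto simp: Suc_le_eq)
  then show ?thesis using False by (simp add: des_def cnt_card)
qed

lemma asc_cnt: "asc xs = (if xs = [] then 0 else 1) + cnt (\<lambda>(a,b). a < b) xs"
proof (cases "xs = []")
  case True then show ?thesis by (simp add: asc_def)
next
  case False
  have "{i\<in>{0..<length xs}. i = 0 \<or> xs ! (i - 1) < xs ! i}
    = insert 0 {i\<in>{1..<length xs}. (\<lambda>(a,b). a < b) (xs!(i-1), xs!i)}"
    using False by auto
  then show ?thesis using False by (simp add: asc_def cnt_card)
qed

lemma plat_cnt: "plat xs = cnt (\<lambda>(a,b). a = b) xs"
  by (simp add: plat_def cnt_card)

lemma W_ne: "W t \<noteq> [] \<and> hd (W t) = lab t"
  by (cases t) auto

lemma last_aux: "last (x # concat (map (\<lambda>U. f U @ [x]) cs)) = x"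
  by (induction cs) auto

lemma W_last: "last (W t) = lab t"
  by (cases t) (simp add: last_aux del: last.simps)

lemma W_decomp: "W (Node l cs) = concat ([l] # concat (map (\<lambda>U. map W U @ [[l]]) cs))"
  by (induction cs) auto

lemma hd_aux: "map hd (concat (map (\<lambda>U. map W U @ [[l]]) cs)) = concat (map (\<lambda>U. map lab U @ [l]) cs)"
  by (induction cs) (auto simp: W_ne)

lemma sum_aux: "sum_list (map (cnt P) (concat (map (\<lambda>U. map W U @ [[l]]) cs)))
   = sum_list (map (\<lambda>U. sum_list (map (\<lambda>c. cnt P (W c)) U)) cs)"
  by (induction cs) (auto simp: o_def)

lemma W_cnt: "cnt P (W (Node l cs)) = cnt P (l # concat (map (\<lambda>U. map lab U @ [l]) cs))
   + sum_list (map (\<lambda>U. sum_list (map (\<lambda>c. cnt P (W c)) U)) cs)"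
proof -
  have "\<forall>L\<in>set ([l] # concat (map (\<lambda>U. map W U @ [[l]]) cs)). L \<noteq> [] \<and> last L = hd L"
    by (auto simp: W_ne W_last)
  from cnt_concat[OF this, of P] show ?thesis
    by (simp only: W_decomp[symmetric] list.map list.sel(1) hd_aux sum_aux sum_list.Cons) simp
qed

lemma vword_aux: "concat (map (\<lambda>U. l # map lab U) cs) @ [l] = l # concat (map (\<lambda>U. map lab U @ [l]) cs)"
  by (induction cs) auto

lemma vword_ne: "cs \<noteq> [] \<Longrightarrow> vword (Node l cs) \<noteq> [] \<and> hd (vword (Node l cs)) = l"
  by (cases cs) auto

lemma cdes_W: "k \<ge> 2 \<Longrightarrow> wf_node k t \<Longrightarrow> cnt (\<lambda>(a,b). b < a) (W t) = cdes_node t"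
proof (induction t)
  case (Node l cs)
  have ne: "cs \<noteq> []" using Node.prems by auto
  have "cdes_seq (vword (Node l cs)) = cnt (\<lambda>(a,b). b < a) (l # concat (map (\<lambda>U. map lab U @ [l]) cs))"
    unfolding cdes_seq_def using cyc_lemma[of "vword (Node l cs)" "\<lambda>a b. b < a"] vword_ne[OF ne]
    by (simp add: vword_aux)
  moreover have "map (\<lambda>U. sum_list (map (\<lambda>c. cnt (\<lambda>(a,b). b < a) (W c)) U)) cs
     = map (\<lambda>U. sum_list (map cdes_node U)) cs"
  proof -
    have ih: "U \<in> set cs \<Longrightarrow> c \<in> set U \<Longrightarrow> cnt (\<lambda>(a,b). b < a) (W c) = cdes_node c" for U c
      using Node.IH Node.prems by auto
    show ?thesis by (auto intro!: map_cong arg_cong[where f=sum_list] simp: ih)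
  qed
  ultimately show ?case by (simp only: W_cnt cdes_node.simps)
qed

lemma casc_W: "k \<ge> 2 \<Longrightarrow> wf_node k t \<Longrightarrow> cnt (\<lambda>(a,b). a < b) (W t) = casc_node t"
proof (induction t)
  case (Node l cs)
  have ne: "cs \<noteq> []" using Node.prems by auto
  have "casc_seq (vword (Node l cs)) = cnt (\<lambda>(a,b). a < b) (l # concat (map (\<lambda>U. map lab U @ [l]) cs))"
    unfolding casc_seq_def using cyc_lemma[of "vword (Node l cs)" "\<lambda>a b. a < b"] vword_ne[OF ne]
    by (simp add: vword_aux)
  moreover have "map (\<lambda>U. sum_list (map (\<lambda>c. cnt (\<lambda>(a,b). a < b) (W c)) U)) cs
     = map (\<lambda>U. sum_list (map casc_node U)) cs"
  proof -
    have ih: "U \<in> set cs \<Longrightarrow> c \<in> set U \<Longrightarrow> cnt (\<lambda>(a,b). a < b) (W c) = casc_node c" for U c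
      using Node.IH Node.prems by auto
    show ?thesis by (auto intro!: map_cong arg_cong[where f=sum_list] simp: ih)
  qed
  ultimately show ?case by (simp only: W_cnt casc_node.simps)
qed

lemma cnt_distinct: "distinct xs \<Longrightarrow> cnt (\<lambda>(a,b). a = b) xs = 0"
  by (induction "\<lambda>(a::nat,b::nat). a = b" xs rule: cnt.induct) auto

lemma eq_aux: "\<forall>x\<in>set xss. distinct (l # x) \<Longrightarrow>
  cnt (\<lambda>(a,b). a = b) (l # concat (map (\<lambda>x. x @ [l]) xss)) = length (filter (\<lambda>x. x = []) xss)"
proof (induction xss)
  case Nil then show ?case by simp
next
  case (Cons x xss)
  have "l # concat (map (\<lambda>x. x @ [l]) (x # xss)) = (l # x) @ (l # concat (map (\<lambda>x. x @ [l]) xss))"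
    by simp
  moreover have "cnt (\<lambda>(a,b). a = b) (l # x) = 0" using Cons.prems by (intro cnt_distinct) auto
  moreover have "last (l # x) = l \<longleftrightarrow> x = []" using Cons.prems
    by (cases "x = []") auto
  ultimately show ?case using Cons by (simp only: cnt_append) auto
qed

lemma distinct_concat_mem: "distinct (concat xss) \<Longrightarrow> ys \<in> set xss \<Longrightarrow> distinct ys"
  by (induction xss) auto

lemma lab_in: "lab c \<in> set (labs c)"
  by (cases c) auto

lemma labs_aux: "distinct (concat (map labs U)) \<Longrightarrow> distinct (map lab U) \<and> set (map lab U) \<subseteq> set (concat (map labs U))"
proof (induction U)
  case (Cons c U)
  then show ?case using lab_in[of c] by auto
qed simp

lemma emp_W: "distinct (labs t) \<Longrightarrow> cnt (\<lambda>(a,b). a = b) (W t) = emp_node t"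
proof (induction t)
  case (Node l cs)
  have d: "distinct (concat (map (\<lambda>U. concat (map labs U)) cs))" and
    nl: "l \<notin> set (concat (map (\<lambda>U. concat (map labs U)) cs))" using Node.prems by auto
  have dU: "U \<in> set cs \<Longrightarrow> distinct (concat (map labs U))" for U
    using distinct_concat_mem[OF d] by auto
  have dc: "U \<in> set cs \<Longrightarrow> c \<in> set U \<Longrightarrow> distinct (labs c)" for U c
    using distinct_concat_mem[OF dU[of U]] by auto
  have "\<forall>x\<in>set (map (map lab) cs). distinct (l # x)"
  proof
    fix x assume "x \<in> set (map (map lab) cs)"
    then obtain U where U: "U \<in> set cs" "x = map lab U" by auto
    from labs_aux[OF dU[OF U(1)]] nl U show "distinct (l # x)" by auto
  qed
  from eq_aux[OF this] have "cnt (\<lambda>(a,b). a = b) (l # concat (map (\<lambda>U. map lab U @ [l]) cs))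
     = length (filter (\<lambda>U. U = []) cs)"
    by (simp add: o_def)
  moreover have "map (\<lambda>U. sum_list (map (\<lambda>c. cnt (\<lambda>(a,b). a = b) (W c)) U)) cs
     = map (\<lambda>U. sum_list (map emp_node U)) cs"
    using Node.IH dc by (auto intro!: map_cong arg_cong[where f=sum_list])
  ultimately show ?case by (simp only: W_cnt emp_node.simps)
qed

lemma phi_cnt: "cnt P (phi T) = cnt P (map lab T) + sum_list (map (\<lambda>t. cnt P (W t)) T)"
proof -
  have "\<forall>L\<in>set (map W T). L \<noteq> [] \<and> last L = hd L" by (auto simp: W_ne W_last)
  from cnt_concat[OF this, of P] show ?thesis
    by (simp add: phi_def o_def W_ne)
qed

lemma phi_ne: "phi T = [] \<longleftrightarrow> T = []"
  by (auto simp: phi_def W_ne)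

theorem lemma4p5:
  fixes k n :: nat and T :: "ltree list"
  assumes "k \<ge> 2" and "in_Tkn k n T"
  shows "asc (phi T) = casc T \<and> des (phi T) = cdes T \<and> plat (phi T) = emp T"
proof -
  have wf: "\<forall>t\<in>set T. wf_node k t" and dl: "distinct (concat (map labs T))"
    using assms(2) by (auto simp: in_Tkn_def tree_labels_def)
  have 1: "map (\<lambda>t. cnt (\<lambda>(a,b). a < b) (W t)) T = map casc_node T"
    using casc_W[OF assms(1)] wf by auto
  have 2: "map (\<lambda>t. cnt (\<lambda>(a,b). b < a) (W t)) T = map cdes_node T"
    using cdes_W[OF assms(1)] wf by auto
  have 3: "map (\<lambda>t. cnt (\<lambda>(a,b). a = b) (W t)) T = map emp_node T"
    using emp_W distinct_concat_mem[OF dl] by auto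
  have 4: "cnt (\<lambda>(a,b). a = b) (map lab T) = 0"
    using labs_aux[OF dl] cnt_distinct by blast
  show ?thesis
    by (simp add: 4 asc_cnt des_cnt plat_cnt phi_cnt phi_ne 1 2 3 casc_def cdes_def emp_def)
qed

end
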